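(* Let $I$ be an ideal of $C(X)_\mathcal{P}$. Then $I$ is a $z_\mathcal{P}$-ideal if and only if $I$ is a $z$-ideal of the ring $C(X)_\mathcal{P}$.
   Context: Let $(X,\tau)$ be a $T_1$ topological space and $\mathcal{P}$ an ideal of closed subsets of $X$ (a nonempty family of closed sets closed under finite unions and under taking closed subsets). For $f\colon X\to\mathbb{R}$, $D_f$ denotes the set of points of $X$ at which $f$ is discontinuous, and $C(X)_\mathcal{P}=\{f\colon X\to\mathbb{R} : \overline{D_f}\in\mathcal{P}\}$, a commutative ring with unity under pointwise operations. For $f\in C(X)_\mathcal{P}$, $Z_\mathcal{P}(f)=\{x\in X: f(x)=0\}$. An ideal $I$ of $C(X)_\mathcal{P}$ is a $z_\mathcal{P}$-ideal if whenever $f\in I$, $g\in C(X)_\mathcal{P}$ and $Z_\mathcal{P}(f)\subseteq Z_\mathcal{P}(g)$, then $g\in I$. For a commutative ring $R$ with unity and $a\in R$, $M(a)$ is the intersection of all maximal ideals of $R$ containing $a$; an ideal $I$ of $R$ is a $z$-ideal if $a\in I$ implies $M(a)\subseteq I$. *)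

theory Defs
  imports "HOL-Analysis.Analysis" "HOL-Algebra.Ideal"
begin

definition cont_at :: "'a topology \<Rightarrow> ('a \<Rightarrow> real) \<Rightarrow> 'a \<Rightarrow> bool" where
  "cont_at X f x \<longleftrightarrow> (\<forall>e>0. \<exists>U. openin X U \<and> x \<in> U \<and> (\<forall>y\<in>U. \<bar>f y - f x\<bar> < e))"

definition disc_set :: "'a topology \<Rightarrow> ('a \<Rightarrow> real) \<Rightarrow> 'a set" where
  "disc_set X f = {x \<in> topspace X. \<not> cont_at X f x}"

definition closed_ideal :: "'a topology \<Rightarrow> 'a set set \<Rightarrow> bool" where
  "closed_ideal X P \<longleftrightarrow> P \<noteq> {} \<and> (\<forall>A\<in>P. closedin X A)
     \<and> (\<forall>A\<in>P. \<forall>B\<in>P. A \<union> B \<in> P)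
     \<and> (\<forall>A\<in>P. \<forall>B. closedin X B \<and> B \<subseteq> A \<longrightarrow> B \<in> P)"

text \<open>Functions X -> R are represented as functions on the type that vanish off topspace X.\<close>
definition CXP_carrier :: "'a topology \<Rightarrow> 'a set set \<Rightarrow> ('a \<Rightarrow> real) set" where
  "CXP_carrier X P = {f. (\<forall>x. x \<notin> topspace X \<longrightarrow> f x = 0) \<and> X closure_of (disc_set X f) \<in> P}"

definition CXP :: "'a topology \<Rightarrow> 'a set set \<Rightarrow> ('a \<Rightarrow> real) ring" where
  "CXP X P = \<lparr> carrier = CXP_carrier X P,
     mult = (\<lambda>f g x. if x \<in> topspace X then f x * g x else 0),
     one = (\<lambda>x. if x \<in> topspace X then 1 else 0),
     zero = (\<lambda>x. 0),
     add = (\<lambda>f g x. if x \<in> topspace X then f x + g x else 0) \<rparr>"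

definition zeroset :: "'a topology \<Rightarrow> ('a \<Rightarrow> real) \<Rightarrow> 'a set" where
  "zeroset X f = {x \<in> topspace X. f x = 0}"

definition zP_ideal :: "'a topology \<Rightarrow> 'a set set \<Rightarrow> ('a \<Rightarrow> real) set \<Rightarrow> bool" where
  "zP_ideal X P I \<longleftrightarrow> ideal I (CXP X P) \<and>
     (\<forall>f\<in>I. \<forall>g\<in>CXP_carrier X P. zeroset X f \<subseteq> zeroset X g \<longrightarrow> g \<in> I)"

definition Mset :: "('b, 'm) ring_scheme \<Rightarrow> 'b \<Rightarrow> 'b set" where
  "Mset R a = carrier R \<inter> \<Inter> {M. maximalideal M R \<and> a \<in> M}"

definition z_ideal :: "('b, 'm) ring_scheme \<Rightarrow> 'b set \<Rightarrow> bool" where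
  "z_ideal R I \<longleftrightarrow> ideal I R \<and> (\<forall>a\<in>I. Mset R a \<subseteq> I)"

end

theory Submission
  imports Defs
begin

lemma cont_at_tendsto:
  "x \<in> topspace X \<Longrightarrow> cont_at X f x \<longleftrightarrow> (f \<longlongrightarrow> f x) (nhdsin X x)"
  unfolding cont_at_def tendsto_iff eventually_nhdsin dist_real_def by auto

lemma cont_inv:
  assumes x: "x \<in> topspace X" and c: "cont_at X u x" and nz: "u x \<noteq> 0"
  shows "cont_at X (\<lambda>y. if y \<in> topspace X then 1 / u y else 0) x"
proof -
  have "(u \<longlongrightarrow> u x) (nhdsin X x)" using c unfolding cont_at_tendsto[OF x] .
  hence t: "((\<lambda>y. inverse (u y)) \<longlongrightarrow> inverse (u x)) (nhdsin X x)"
    using nz by (rule tendsto_inverse)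
  have ev: "eventually (\<lambda>y. inverse (u y) = (if y \<in> topspace X then 1 / u y else 0)) (nhdsin X x)"
    unfolding eventually_nhdsin
    by (rule disjI2, rule exI[of _ "topspace X"]) (simp add: x inverse_eq_divide)
  have e: "(if x \<in> topspace X then 1 / u x else 0) = inverse (u x)"
    using x by (simp add: inverse_eq_divide)
  have "((\<lambda>y. if y \<in> topspace X then 1 / u y else 0) \<longlongrightarrow> inverse (u x)) (nhdsin X x)"
    using tendsto_cong[OF ev, THEN iffD1, OF t] .
  thus ?thesis unfolding cont_at_tendsto[OF x] e .
qed

lemma cont_const:
  "x \<in> topspace X \<Longrightarrow> cont_at X (\<lambda>y. if y \<in> topspace X then c else 0) x"
  unfolding cont_at_def by (intro allI impI exI[of _ "topspace X"]) auto

lemma closed_ideal_sub: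
  assumes "closed_ideal X P" "A \<in> P" "B \<subseteq> A"
  shows "X closure_of B \<in> P"
proof -
  have c: "\<forall>A\<in>P. closedin X A" and d: "\<forall>A\<in>P. \<forall>B. closedin X B \<and> B \<subseteq> A \<longrightarrow> B \<in> P"
    using assms(1) unfolding closed_ideal_def by blast+
  have "closedin X A" using c assms(2) by blast
  hence s: "X closure_of B \<subseteq> A" by (rule closure_of_minimal[OF assms(3)])
  have "closedin X (X closure_of B)" by (rule closedin_closure_of)
  thus ?thesis using d assms(2) s by blast
qed

lemma const_carrier:
  assumes "closed_ideal X P"
  shows "(\<lambda>y. if y \<in> topspace X then c else 0) \<in> CXP_carrier X P"
proof -
  obtain A where "A \<in> P" using assms unfolding closed_ideal_def by auto
  have "disc_set X (\<lambda>y. if y \<in> topspace X then c else 0) = {}"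
    unfolding disc_set_def using cont_const[of _ X c] by blast
  thus ?thesis using closed_ideal_sub[OF assms \<open>A \<in> P\<close>, of "{}"] unfolding CXP_carrier_def by auto
qed

lemma inv_carrier:
  assumes "closed_ideal X P" "u \<in> CXP_carrier X P" "\<forall>x\<in>topspace X. u x \<noteq> 0"
  shows "(\<lambda>y. if y \<in> topspace X then 1 / u y else 0) \<in> CXP_carrier X P"
proof -
  let ?v = "\<lambda>y. if y \<in> topspace X then 1 / u y else 0"
  have sub: "disc_set X ?v \<subseteq> disc_set X u"
  proof
    fix x assume x: "x \<in> disc_set X ?v"
    hence xt: "x \<in> topspace X" and nc: "\<not> cont_at X ?v x" unfolding disc_set_def by auto
    have "\<not> cont_at X u x"
    proof
      assume "cont_at X u x"
      hence "cont_at X ?v x" using cont_inv[OF xt] assms(3) xt by blast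
      thus False using nc by contradiction
    qed
    thus "x \<in> disc_set X u" using xt unfolding disc_set_def by blast
  qed
  have "X closure_of disc_set X u \<in> P" using assms(2) unfolding CXP_carrier_def by blast
  hence "X closure_of disc_set X ?v \<in> P"
  proof (rule closed_ideal_sub[OF assms(1)])
    have "disc_set X u \<subseteq> topspace X" unfolding disc_set_def by blast
    hence "disc_set X u \<subseteq> X closure_of disc_set X u" by (rule closure_of_subset)
    thus "disc_set X ?v \<subseteq> X closure_of disc_set X u" using sub by blast
  qed
  moreover have "\<forall>x. x \<notin> topspace X \<longrightarrow> ?v x = 0" by simp
  ultimately show ?thesis unfolding CXP_carrier_def by blast
qed

lemma CXP_simps:
  "carrier (CXP X P) = CXP_carrier X P"
  "x \<in> topspace X \<Longrightarrow> (a \<oplus>\<^bsub>CXP X P\<^esub> b) x = a x + b x"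
  "x \<in> topspace X \<Longrightarrow> (a \<otimes>\<^bsub>CXP X P\<^esub> b) x = a x * b x"
  "x \<in> topspace X \<Longrightarrow> (\<one>\<^bsub>CXP X P\<^esub>) x = 1"
  "(\<zero>\<^bsub>CXP X P\<^esub>) x = 0"
  by (simp_all add: CXP_def)

lemma CXP_cring:
  assumes "ring (CXP X P)"
  shows "cring (CXP X P)"
proof -
  interpret ring "CXP X P" by fact
  have "comm_monoid (CXP X P)"
    by (rule monoid_comm_monoidI) (auto simp: CXP_def mult.commute)
  thus ?thesis by (intro cring.intro) (auto intro: assms)
qed

lemma Mset_sub:
  assumes cl: "closed_ideal X P" and r: "ring (CXP X P)"
    and f: "f \<in> CXP_carrier X P" and g: "g \<in> Mset (CXP X P) f"
  shows "zeroset X f \<subseteq> zeroset X g"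
proof
  let ?R = "CXP X P"
  interpret cring ?R using CXP_cring[OF r] .
  fix x assume x: "x \<in> zeroset X f"
  hence xt: "x \<in> topspace X" and fx: "f x = 0" unfolding zeroset_def by auto
  define Mx where "Mx = {h \<in> CXP_carrier X P. h x = 0}"
  have sub: "subgroup Mx (add_monoid ?R)"
  proof
    show "Mx \<subseteq> carrier (add_monoid ?R)" unfolding Mx_def by (auto simp: CXP_simps)
    show "\<one>\<^bsub>add_monoid ?R\<^esub> \<in> Mx" unfolding Mx_def
      using zero_closed by (auto simp: CXP_simps)
    fix a b assume a: "a \<in> Mx" and b: "b \<in> Mx"
    show "a \<otimes>\<^bsub>add_monoid ?R\<^esub> b \<in> Mx"
      using a b a_closed[of a b] xt unfolding Mx_def by (auto simp: CXP_simps)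
    have ac: "a \<in> carrier ?R" using a unfolding Mx_def by (simp add: CXP_simps)
    have "(a \<oplus>\<^bsub>?R\<^esub> (\<ominus>\<^bsub>?R\<^esub> a)) x = 0"
      using r_neg[OF ac] by (simp add: CXP_simps)
    hence "(\<ominus>\<^bsub>?R\<^esub> a) x = 0" using a xt unfolding Mx_def by (simp add: CXP_simps)
    thus "inv\<^bsub>add_monoid ?R\<^esub> a \<in> Mx"
      using a_inv_closed[OF ac] unfolding Mx_def a_inv_def by (simp add: CXP_simps)
  qed
  have idl: "ideal Mx ?R"
    by (rule idealI[OF r sub]) (auto simp: Mx_def CXP_simps xt m_closed[unfolded CXP_simps])
  have "maximalideal Mx ?R"
  proof (rule maximalidealI[OF idl])
    show "carrier ?R \<noteq> Mx"
    proof
      assume "carrier ?R = Mx"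
      hence "\<one>\<^bsub>?R\<^esub> \<in> Mx" using one_closed by blast
      hence "(\<one>\<^bsub>?R\<^esub>) x = 0" unfolding Mx_def by blast
      thus False using xt by (simp add: CXP_simps)
    qed
    fix J assume J: "ideal J ?R" "Mx \<subseteq> J" "J \<subseteq> carrier ?R"
    show "J = Mx \<or> J = carrier ?R"
    proof (cases "J = Mx")
      case False
      then obtain h where h: "h \<in> J" "h \<notin> Mx" using J by auto
      hence hc: "h \<in> carrier ?R" using J(3) by blast
      hence hx: "h x \<noteq> 0" using h unfolding Mx_def by (auto simp: CXP_simps)
      define c where "c = (\<lambda>y. if y \<in> topspace X then 1 / h x else 0)"
      have cc: "c \<in> carrier ?R" unfolding c_def CXP_simps by (rule const_carrier[OF cl])
      define k where "k = \<one>\<^bsub>?R\<^esub> \<ominus>\<^bsub>?R\<^esub> (c \<otimes>\<^bsub>?R\<^esub> h)"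
      have kc: "k \<in> carrier ?R" unfolding k_def using cc hc by simp
      have eq: "k \<oplus>\<^bsub>?R\<^esub> (c \<otimes>\<^bsub>?R\<^esub> h) = \<one>\<^bsub>?R\<^esub>"
      proof -
        have ch: "c \<otimes>\<^bsub>?R\<^esub> h \<in> carrier ?R" using cc hc by (rule m_closed)
        have "k \<oplus>\<^bsub>?R\<^esub> (c \<otimes>\<^bsub>?R\<^esub> h) = \<one>\<^bsub>?R\<^esub> \<oplus>\<^bsub>?R\<^esub> ((\<ominus>\<^bsub>?R\<^esub> (c \<otimes>\<^bsub>?R\<^esub> h)) \<oplus>\<^bsub>?R\<^esub> (c \<otimes>\<^bsub>?R\<^esub> h))"
          unfolding k_def minus_eq by (rule a_assoc[OF one_closed a_inv_closed[OF ch] ch])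
        also have "\<dots> = \<one>\<^bsub>?R\<^esub>" using ch by (simp only: l_neg r_zero one_closed)
        finally show ?thesis .
      qed
      have "(k \<oplus>\<^bsub>?R\<^esub> (c \<otimes>\<^bsub>?R\<^esub> h)) x = 1" using eq xt by (simp add: CXP_simps)
      hence "k x = 0" using xt hx by (simp add: CXP_simps c_def)
      hence "k \<in> Mx" using kc unfolding Mx_def by (simp add: CXP_simps)
      hence "k \<in> J" using J(2) by blast
      moreover have "c \<otimes>\<^bsub>?R\<^esub> h \<in> J" using ideal.I_l_closed[OF J(1) h(1) cc] .
      ultimately have "k \<oplus>\<^bsub>?R\<^esub> (c \<otimes>\<^bsub>?R\<^esub> h) \<in> J"
        by (rule additive_subgroup.a_closed[OF ideal.axioms(1)[OF J(1)]])
      hence "\<one>\<^bsub>?R\<^esub> \<in> J" by (simp only: eq)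
      thus ?thesis using ideal.one_imp_carrier[OF J(1)] by blast
    qed simp
  qed
  moreover have "f \<in> Mx" using f fx unfolding Mx_def by auto
  ultimately have "g \<in> Mx" using g unfolding Mset_def by auto
  thus "x \<in> zeroset X g" using xt unfolding Mx_def zeroset_def by auto
qed


lemma max_z:
  assumes cl: "closed_ideal X P" and r: "ring (CXP X P)"
    and M: "maximalideal M (CXP X P)" and fM: "f \<in> M"
    and g: "g \<in> CXP_carrier X P" and Z: "zeroset X f \<subseteq> zeroset X g"
  shows "g \<in> M"
proof (rule ccontr)
  let ?R = "CXP X P"
  interpret cring ?R using CXP_cring[OF r] .
  interpret M: maximalideal M ?R by fact
  assume gM: "g \<notin> M"
  have gc: "g \<in> carrier ?R" using g by (simp add: CXP_simps)
  define J where "J = M <+>\<^bsub>?R\<^esub> PIdl\<^bsub>?R\<^esub> g"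
  have J: "ideal J ?R" unfolding J_def by (intro add_ideals M.is_ideal cgenideal_ideal gc)
  have z0: "\<zero>\<^bsub>?R\<^esub> \<in> PIdl\<^bsub>?R\<^esub> g"
    using additive_subgroup.zero_closed[OF ideal.axioms(1)[OF cgenideal_ideal[OF gc]]] .
  have zM: "\<zero>\<^bsub>?R\<^esub> \<in> M"
    using additive_subgroup.zero_closed[OF M.additive_subgroup_axioms] .
  have MJ: "M \<subseteq> J"
  proof
    fix m assume m: "m \<in> M"
    have e: "m = m \<oplus>\<^bsub>?R\<^esub> \<zero>\<^bsub>?R\<^esub>" using M.Icarr[OF m] by simp
    show "m \<in> J" unfolding J_def set_add_def'
      by (rule UN_I[OF m], rule UN_I[OF z0]) (subst e, rule singletonI)
  qed
  have e: "g = \<zero>\<^bsub>?R\<^esub> \<oplus>\<^bsub>?R\<^esub> g" using gc by simp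
  have "g \<in> J" unfolding J_def set_add_def'
    by (rule UN_I[OF zM], rule UN_I[OF cgenideal_self[OF gc]]) (subst e, rule singletonI)
  hence "J \<noteq> M" using gM by blast
  moreover have "J \<subseteq> carrier ?R" by (auto dest: ideal.Icarr[OF J])
  ultimately have "J = carrier ?R" using M.I_maximal[OF J MJ \<open>J \<subseteq> carrier ?R\<close>] by simp
  hence "\<one>\<^bsub>?R\<^esub> \<in> J" by simp
  then obtain m k where m: "m \<in> M" and k: "k \<in> PIdl\<^bsub>?R\<^esub> g"
    and one0: "\<one>\<^bsub>?R\<^esub> = m \<oplus>\<^bsub>?R\<^esub> k"
    unfolding J_def set_add_def' by blast
  then obtain h where h: "h \<in> carrier ?R" and kh: "k = h \<otimes>\<^bsub>?R\<^esub> g"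
    unfolding cgenideal_def by blast
  have one: "\<one>\<^bsub>?R\<^esub> = m \<oplus>\<^bsub>?R\<^esub> (h \<otimes>\<^bsub>?R\<^esub> g)" using one0 kh by simp
  have mc: "m \<in> carrier ?R" using m M.Icarr by blast
  have fc: "f \<in> carrier ?R" using fM M.Icarr by blast
  define u where "u = (m \<otimes>\<^bsub>?R\<^esub> m) \<oplus>\<^bsub>?R\<^esub> (f \<otimes>\<^bsub>?R\<^esub> f)"
  have uM: "u \<in> M" unfolding u_def using m fM mc fc by (intro M.a_closed M.I_r_closed)
  have uc: "u \<in> CXP_carrier X P" using uM M.Icarr by (auto simp: CXP_simps)
  have unz: "\<forall>x\<in>topspace X. u x \<noteq> 0"
  proof
    fix x assume xt: "x \<in> topspace X"
    have 1: "m x + h x * g x = 1" using arg_cong[OF one, of "\<lambda>k. k x"] xt by (simp add: CXP_simps)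
    have u: "u x = m x * m x + f x * f x" unfolding u_def using xt by (simp add: CXP_simps)
    show "u x \<noteq> 0"
    proof
      assume "u x = 0"
      hence "m x = 0 \<and> f x = 0" unfolding u by (simp only: sum_squares_eq_zero_iff)
      hence "m x = 0" "f x = 0" by simp_all
      hence "g x = 0" using Z xt unfolding zeroset_def by auto
      thus False using 1 \<open>m x = 0\<close> by simp
    qed
  qed
  define v where "v = (\<lambda>y. if y \<in> topspace X then 1 / u y else 0)"
  have vc: "v \<in> carrier ?R" unfolding v_def CXP_simps by (rule inv_carrier[OF cl uc unz])
  have "v \<otimes>\<^bsub>?R\<^esub> u = \<one>\<^bsub>?R\<^esub>"
  proof (rule ext)
    fix x show "(v \<otimes>\<^bsub>?R\<^esub> u) x = (\<one>\<^bsub>?R\<^esub>) x"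
      by (cases "x \<in> topspace X") (simp_all add: CXP_def v_def unz)
  qed
  hence "\<one>\<^bsub>?R\<^esub> \<in> M" using M.I_l_closed[OF uM vc] by simp
  thus False using M.one_imp_carrier M.I_notcarr by blast
qed

theorem theorem2p3:
  fixes X :: "'a topology" and P :: "'a set set" and I :: "('a \<Rightarrow> real) set"
  assumes "t1_space X"
    and "closed_ideal X P"
    and "ideal I (CXP X P)"
  shows "zP_ideal X P I \<longleftrightarrow> z_ideal (CXP X P) I"
proof -
  have r: "ring (CXP X P)" using assms(3) by (rule ideal.axioms(2))
  have fc: "f \<in> CXP_carrier X P" if "f \<in> I" for f
  proof -
    have "f \<in> carrier (CXP X P)" using that by (rule ideal.Icarr[OF assms(3)])
    thus ?thesis by (simp only: CXP_simps)
  qed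
  show ?thesis
  proof
    assume zp: "zP_ideal X P I"
    have "Mset (CXP X P) a \<subseteq> I" if a: "a \<in> I" for a
    proof
      fix g assume g: "g \<in> Mset (CXP X P) a"
      have Z: "zeroset X a \<subseteq> zeroset X g" using Mset_sub[OF assms(2) r fc[OF a] g] .
      have gc: "g \<in> CXP_carrier X P" using g unfolding Mset_def by (simp add: CXP_simps)
      have "\<forall>f\<in>I. \<forall>g\<in>CXP_carrier X P. zeroset X f \<subseteq> zeroset X g \<longrightarrow> g \<in> I"
        using zp unfolding zP_ideal_def by (rule conjunct2)
      thus "g \<in> I" using a gc Z by blast
    qed
    thus "z_ideal (CXP X P) I" unfolding z_ideal_def using assms(3) by blast
  next
    assume z: "z_ideal (CXP X P) I"
    have M: "\<forall>a\<in>I. Mset (CXP X P) a \<subseteq> I" using z unfolding z_ideal_def by (rule conjunct2)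
    have "g \<in> I" if f: "f \<in> I" and g: "g \<in> CXP_carrier X P"
        and Z: "zeroset X f \<subseteq> zeroset X g" for f g
    proof -
      have "g \<in> M'" if "maximalideal M' (CXP X P)" "f \<in> M'" for M'
        by (rule max_z[OF assms(2) r that g Z])
      hence "g \<in> \<Inter> {M'. maximalideal M' (CXP X P) \<and> f \<in> M'}" by blast
      hence "g \<in> Mset (CXP X P) f" unfolding Mset_def using g by (simp add: CXP_simps)
      thus "g \<in> I" using M f by blast
    qed
    thus "zP_ideal X P I" unfolding zP_ideal_def using assms(3) by blast
  qed
qed

end
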